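(* For every positive integer $h$, there is a protocol solving MEQ-AD$(3,6^h)$ with communication complexity $h\log_2 27$; in particular $C_{AD}(3,6^h)\le h\log_2 27$.
   Context: There are $n$ nodes labeled $1,\dots,n$ (here $n=3$); node $i$ privately holds an input $x_i\in\{1,\dots,M\}$. Communication is over private point-to-point links of a fully connected synchronous network. A deterministic protocol $P$ is a fixed finite schedule of steps $l=1,\dots,L(P)$; in step $l$ a prescribed node $T_l$ sends to a prescribed node $R_l\neq T_l$ one symbol $f_l(x_{T_l},T_l^+(l))$, where $T_l^+(l)$ is the sequence of symbols $T_l$ has received in steps $1,\dots,l-1$; only $R_l$ receives it. Its complexity is $C(P)=\sum_{l}\log_2 S_l(P)$, with $S_l(P)$ the number of distinct values of the step-$l$ symbol over all inputs in $\{1,\dots,M\}^n$. At the end each node $i$ outputs a bit $EQ_i$ depending on $x_i$ and the symbols it received. $P$ solves MEQ-AD$(n,M)$ if for every input, $EQ_1=\cdots=EQ_n=0$ iff $x_1=\cdots=x_n$. $C_{AD}(n,M)$ is the infimum of $C(P)$ over protocols solving MEQ-AD$(n,M)$. *)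

theory Defs
  imports Complex_Main "HOL-Library.FuncSet"
begin

text \<open>A step is a triple (T, R, f): node T sends to node R the symbol f (x T) rec,
  where rec is the list of symbols T has received in earlier steps (in order).\<close>

type_synonym input = "nat \<Rightarrow> nat"
type_synonym step = "nat \<times> nat \<times> (nat \<Rightarrow> nat list \<Rightarrow> nat)"
type_synonym protocol = "step list"

definition inputs :: "nat \<Rightarrow> nat \<Rightarrow> input set" where
  "inputs n M = ({1..n} \<rightarrow>\<^sub>E {1..M})"

definition step_T :: "step \<Rightarrow> nat" where "step_T s = fst s"
definition step_R :: "step \<Rightarrow> nat" where "step_R s = fst (snd s)"
definition step_f :: "step \<Rightarrow> nat \<Rightarrow> nat list \<Rightarrow> nat" where "step_f s = snd (snd s)"

definition received :: "nat \<Rightarrow> (step \<times> nat) list \<Rightarrow> nat list" where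
  "received i hist = map snd (filter (\<lambda>p. step_R (fst p) = i) hist)"

fun exec :: "protocol \<Rightarrow> (step \<times> nat) list \<Rightarrow> input \<Rightarrow> (step \<times> nat) list" where
  "exec [] hist x = hist"
| "exec (s # ss) hist x =
     exec ss (hist @ [(s, step_f s (x (step_T s)) (received (step_T s) hist))]) x"

definition trace :: "protocol \<Rightarrow> input \<Rightarrow> (step \<times> nat) list" where
  "trace P x = exec P [] x"

text \<open>Symbol sent in step l (0-based) on input x.\<close>
definition sym :: "protocol \<Rightarrow> input \<Rightarrow> nat \<Rightarrow> nat" where
  "sym P x l = snd (trace P x ! l)"

definition valid_protocol :: "nat \<Rightarrow> protocol \<Rightarrow> bool" where
  "valid_protocol n P \<longleftrightarrow> (\<forall>s \<in> set P. step_T s \<in> {1..n} \<and> step_R s \<in> {1..n} \<and> step_T s \<noteq> step_R s)"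

definition S_count :: "nat \<Rightarrow> nat \<Rightarrow> protocol \<Rightarrow> nat \<Rightarrow> nat" where
  "S_count n M P l = card ((\<lambda>x. sym P x l) ` inputs n M)"

definition complexity :: "nat \<Rightarrow> nat \<Rightarrow> protocol \<Rightarrow> real" where
  "complexity n M P = (\<Sum>l<length P. log 2 (real (S_count n M P l)))"

text \<open>Output of node i: out i (x i) (symbols received by i); True means EQ_i = 1.\<close>
definition solves_MEQ_AD :: "nat \<Rightarrow> nat \<Rightarrow> protocol \<Rightarrow> (nat \<Rightarrow> nat \<Rightarrow> nat list \<Rightarrow> bool) \<Rightarrow> bool" where
  "solves_MEQ_AD n M P out \<longleftrightarrow> valid_protocol n P \<and>
     (\<forall>x \<in> inputs n M.
        (\<forall>i\<in>{1..n}. \<not> out i (x i) (received i (trace P x)))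
        \<longleftrightarrow> (\<forall>i\<in>{1..n}. \<forall>j\<in>{1..n}. x i = x j))"

definition C_AD :: "nat \<Rightarrow> nat \<Rightarrow> real" where
  "C_AD n M = Inf {complexity n M P | P. \<exists>out. solves_MEQ_AD n M P out}"

end

theory Submission
  imports Defs
begin

definition lab :: "nat \<Rightarrow> nat \<Rightarrow> nat" where
  "lab j d = [[0,0,1,1,2,2],[0,1,0,2,1,2],[0,1,2,1,2,0::nat]] ! j ! d"

definition dig :: "nat \<Rightarrow> nat \<Rightarrow> nat" where
  "dig k v = ((v - 1) div 6 ^ k) mod 6"

definition stp :: "nat \<Rightarrow> step" where
  "stp l = (l mod 3 + 1, (l mod 3 + 1) mod 3 + 1, \<lambda>v r. lab (l mod 3) (dig (l div 3) v))"

definition prot :: "nat \<Rightarrow> protocol" where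
  "prot h = map stp [0..<3*h]"

definition outf :: "nat \<Rightarrow> nat \<Rightarrow> nat \<Rightarrow> nat list \<Rightarrow> bool" where
  "outf h i v rec = (rec \<noteq> map (\<lambda>l. lab (l mod 3) (dig (l div 3) v))
        (filter (\<lambda>l. (l mod 3 + 1) mod 3 + 1 = i) [0..<3*h]))"

lemma six: "a < (6::nat) \<longleftrightarrow> a = 0 \<or> a = 1 \<or> a = 2 \<or> a = 3 \<or> a = 4 \<or> a = 5" by auto
lemma lab_key:
  assumes "a < 6" "b < 6" "c < 6"
    "lab 0 a = lab 0 b" "lab 1 b = lab 1 c" "lab 2 c = lab 2 a"
  shows "a = b \<and> b = c"
proof -
  have l0: "lab 0 x = [0,0,1,1,2,2::nat] ! x" "lab 1 x = [0,1,0,2,1,2::nat] ! x" "lab 2 x = [0,1,2,1,2,0::nat] ! x" for x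
    by (simp_all add: lab_def)
  show ?thesis using assms unfolding l0 six
    by (elim disjE) simp_all
qed

lemma exec_ign:
  assumes "\<forall>s\<in>set P. \<forall>v r. step_f s v r = step_f s v []"
  shows "exec P hist x = hist @ map (\<lambda>s. (s, step_f s (x (step_T s)) [])) P"
  using assms
proof (induction P arbitrary: hist)
  case Nil
  then show ?case by simp
next
  case (Cons s P)
  have pr: "\<forall>s\<in>set P. \<forall>v r. step_f s v r = step_f s v []"
    using Cons.prems by (meson list.set_intros(2))
  have eq: "step_f s (x (step_T s)) (received (step_T s) hist) = step_f s (x (step_T s)) []"
    using Cons.prems by (meson list.set_intros(1))
  show ?case by (simp only: exec.simps eq Cons.IH[OF pr]) simp
qed

lemma trace_prot:
  "trace (prot h) x = map (\<lambda>l. (stp l, lab (l mod 3) (dig (l div 3) (x (l mod 3 + 1))))) [0..<3*h]"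
proof -
  have "trace (prot h) x = map (\<lambda>s. (s, step_f s (x (step_T s)) [])) (prot h)"
    unfolding trace_def
    by (subst exec_ign) (auto simp: prot_def stp_def step_f_def)
  then show ?thesis by (simp add: prot_def stp_def step_f_def step_T_def)
qed

lemma received_prot:
  "received i (trace (prot h) x) = map (\<lambda>l. lab (l mod 3) (dig (l div 3) (x (l mod 3 + 1))))
        (filter (\<lambda>l. (l mod 3 + 1) mod 3 + 1 = i) [0..<3*h])"
  unfolding received_def trace_prot
  by (simp add: filter_map o_def stp_def step_R_def)

lemma dig_lt: "dig k v < 6" by (simp add: dig_def)

lemma digits_inj:
  fixes a b :: nat
  assumes "a < 6 ^ h" "b < 6 ^ h" "\<forall>k<h. (a div 6 ^ k) mod 6 = (b div 6 ^ k) mod 6"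
  shows "a = b"
  using assms
proof (induction h arbitrary: a b)
  case 0
  then show ?case by simp
next
  case (Suc h)
  have "a div 6 = b div 6"
  proof (rule Suc.IH)
    show "a div 6 < 6 ^ h" using Suc.prems(1) by (simp add: less_mult_imp_div_less mult.commute)
    show "b div 6 < 6 ^ h" using Suc.prems(2) by (simp add: less_mult_imp_div_less mult.commute)
    show "\<forall>k<h. a div 6 div 6 ^ k mod 6 = b div 6 div 6 ^ k mod 6"
    proof (intro allI impI)
      fix k assume "k < h"
      then have "Suc k < Suc h" by simp
      then have "a div 6 ^ Suc k mod 6 = b div 6 ^ Suc k mod 6" using Suc.prems(3) by blast
      then show "a div 6 div 6 ^ k mod 6 = b div 6 div 6 ^ k mod 6"
        by (simp add: div_mult2_eq)
    qed
  qed
  moreover have "a mod 6 = b mod 6" using Suc.prems(3)[rule_format, of 0] by simp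
  ultimately show ?case by (metis div_mult_mod_eq)
qed

lemma all_l_split:
  "(\<forall>l<3*(h::nat). (Q::nat\<Rightarrow>nat\<Rightarrow>bool) (l mod 3) (l div 3)) \<longleftrightarrow> (\<forall>k<h. Q 0 k \<and> Q 1 k \<and> Q 2 k)"
proof
  assume H: "\<forall>l<3*h. Q (l mod 3) (l div 3)"
  show "\<forall>k<h. Q 0 k \<and> Q 1 k \<and> Q 2 k"
  proof (intro allI impI)
    fix k assume kh: "k < h"
    have qj: "Q ((3*k+j) mod 3) ((3*k+j) div 3)" if "j < 3" for j
    proof -
      have "3*k+j < 3*h" using that kh by linarith
      then show ?thesis using H by blast
    qed
    have q0: "Q ((3*k+0) mod 3) ((3*k+0) div 3)" by (rule qj) simp
    have q1: "Q ((3*k+1) mod 3) ((3*k+1) div 3)" by (rule qj) simp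
    have q2: "Q ((3*k+2) mod 3) ((3*k+2) div 3)" by (rule qj) simp
    have e: "(3*k+0) mod 3 = 0" "(3*k+0) div 3 = k" "(3*k+1) mod 3 = 1" "(3*k+1) div 3 = k"
      "(3*k+2) mod 3 = 2" "(3*k+2) div 3 = k" by presburger+
    from q0 q1 q2 show "Q 0 k \<and> Q 1 k \<and> Q 2 k" by (simp only: e)
  qed
next
  assume H: "\<forall>k<h. Q 0 k \<and> Q 1 k \<and> Q 2 k"
  show "\<forall>l<3*h. Q (l mod 3) (l div 3)"
  proof (intro allI impI)
    fix l assume "l < 3*h"
    then have lh: "l div 3 < h" by (simp add: div_less_iff_less_mult mult.commute)
    have "l mod 3 < 3" by simp
    then have "l mod 3 = 0 \<or> l mod 3 = 1 \<or> l mod 3 = 2" by linarith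
    moreover have "Q 0 (l div 3)" "Q 1 (l div 3)" "Q 2 (l div 3)" using H lh by blast+
    ultimately show "Q (l mod 3) (l div 3)" by (elim disjE) simp_all
  qed
qed

lemma dig_witness:
  assumes "k < h" "d < 6"
  shows "dig k (1 + d * 6 ^ k) = d" "1 + d * 6 ^ k \<le> (6::nat) ^ h"
proof -
  show "dig k (1 + d * 6 ^ k) = d" using assms by (simp add: dig_def)
  have "1 + d * 6 ^ k \<le> 1 + 5 * 6 ^ k" using assms by simp
  also have "\<dots> \<le> 6 * 6 ^ k" by simp
  also have "\<dots> = 6 ^ Suc k" by simp
  also have "\<dots> \<le> 6 ^ h" using assms by (intro power_increasing) auto
  finally show "1 + d * 6 ^ k \<le> (6::nat) ^ h" .
qed

lemma lab_range: "j < 3 \<Longrightarrow> d < 6 \<Longrightarrow> lab j d \<in> {0,1,2}"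
  unfolding lab_def six by (auto simp: less_Suc_eq numeral_eq_Suc)

lemma lab_onto: "j < 3 \<Longrightarrow> v \<in> {0,1,2} \<Longrightarrow> \<exists>d<6. lab j d = v"
proof -
  assume "j < 3" "v \<in> {0,1,2}"
  then have "j = 0 \<or> j = 1 \<or> j = 2" "v = 0 \<or> v = 1 \<or> v = 2" by auto
  then show ?thesis
    by (elim disjE) (auto simp: lab_def intro: exI[of _ 0] exI[of _ 1] exI[of _ 2] exI[of _ 3] exI[of _ 4])
qed

lemma sym_prot: "l < 3*h \<Longrightarrow> sym (prot h) x l = lab (l mod 3) (dig (l div 3) (x (l mod 3 + 1)))"
  by (simp add: sym_def trace_prot)

lemma S_count_prot:
  assumes "l < 3*h"
  shows "S_count 3 (6^h) (prot h) l = 3"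
proof -
  have j3: "l mod 3 < 3" by simp
  have kh: "l div 3 < h" using assms by (simp add: div_less_iff_less_mult mult.commute)
  have "(\<lambda>x. sym (prot h) x l) ` inputs 3 (6^h) = {0,1,2}"
  proof
    show "(\<lambda>x. sym (prot h) x l) ` inputs 3 (6^h) \<subseteq> {0,1,2}"
    proof (rule image_subsetI)
      fix x show "sym (prot h) x l \<in> {0,1,2}" unfolding sym_prot[OF assms] by (rule lab_range[OF j3 dig_lt])
    qed
    show "{0,1,2} \<subseteq> (\<lambda>x. sym (prot h) x l) ` inputs 3 (6^h)"
    proof
      fix v :: nat assume "v \<in> {0,1,2}"
      then obtain d where d: "d < 6" "lab (l mod 3) d = v" using lab_onto[OF j3] by blast
      define x where "x = restrict (\<lambda>_. 1 + d * 6 ^ (l div 3)) {1..3::nat}"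
      have "x \<in> inputs 3 (6^h)" unfolding inputs_def x_def restrict_PiE_iff
        using dig_witness(2)[OF kh d(1)] by auto
      moreover have "sym (prot h) x l = v"
        unfolding sym_prot[OF assms] x_def using dig_witness(1)[OF kh d(1)] d(2) j3 by auto
      ultimately show "v \<in> (\<lambda>x. sym (prot h) x l) ` inputs 3 (6^h)" by force
    qed
  qed
  then show ?thesis unfolding S_count_def by simp
qed

lemma complexity_prot: "complexity 3 (6^h) (prot h) = real h * log 2 27"
proof -
  have "complexity 3 (6^h) (prot h) = (\<Sum>l<3*h. log 2 3)"
  proof -
    have len: "length (prot h) = 3*h" by (simp add: prot_def)
    show ?thesis unfolding complexity_def len by (intro sum.cong) (auto simp: S_count_prot)
  qed
  also have "\<dots> = real h * (3 * log 2 3)" by simp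
  also have "3 * log 2 3 = log 2 (3^3)" by (subst log_nat_power) auto
  finally show ?thesis by simp
qed

lemma valid_prot: "valid_protocol 3 (prot h)"
proof -
  have "l mod 3 + 1 \<in> {1..3} \<and> (l mod 3 + 1) mod 3 + 1 \<in> {1..3} \<and> l mod 3 + 1 \<noteq> (l mod 3 + 1) mod 3 + 1" for l :: nat
  proof -
    have "l mod 3 = 0 \<or> l mod 3 = 1 \<or> l mod 3 = 2" by linarith
    then show ?thesis by (elim disjE) simp_all
  qed
  then show ?thesis unfolding valid_protocol_def prot_def
    by (auto simp: stp_def step_T_def step_R_def)
qed

lemma correct_prot:
  assumes x: "x \<in> inputs 3 (6^h)"
  shows "(\<forall>i\<in>{1..3}. \<not> outf h i (x i) (received i (trace (prot h) x)))
        \<longleftrightarrow> (\<forall>i\<in>{1..3}. \<forall>j\<in>{1..3}. x i = x j)"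
proof -
  define Q where "Q = (\<lambda>j k. lab j (dig k (x (j + 1))) = lab j (dig k (x ((j + 1) mod 3 + 1))))"
  have Rr: "(l mod 3 + 1) mod 3 + 1 \<in> {1..3::nat}" for l :: nat by auto
  have "(\<forall>i\<in>{1..3}. \<not> outf h i (x i) (received i (trace (prot h) x)))
     \<longleftrightarrow> (\<forall>i\<in>{1..3}. \<forall>l\<in>set (filter (\<lambda>l. (l mod 3 + 1) mod 3 + 1 = i) [0..<3*h]).
            lab (l mod 3) (dig (l div 3) (x (l mod 3 + 1))) = lab (l mod 3) (dig (l div 3) (x i)))"
    by (simp only: outf_def received_prot map_eq_conv not_not)
  also have "\<dots> \<longleftrightarrow> (\<forall>l<3*h. Q (l mod 3) (l div 3))"
  proof (intro iffI allI impI ballI)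
    fix l assume H: "\<forall>i\<in>{1..3}. \<forall>l\<in>set (filter (\<lambda>l. (l mod 3 + 1) mod 3 + 1 = i) [0..<3*h]).
            lab (l mod 3) (dig (l div 3) (x (l mod 3 + 1))) = lab (l mod 3) (dig (l div 3) (x i))"
      and l: "l < 3*h"
    have "l \<in> set (filter (\<lambda>l'. (l' mod 3 + 1) mod 3 + 1 = (l mod 3 + 1) mod 3 + 1) [0..<3*h])"
      using l by simp
    from H[rule_format, OF Rr this] show "Q (l mod 3) (l div 3)" unfolding Q_def .
  next
    fix i l assume H: "\<forall>l<3*h. Q (l mod 3) (l div 3)" and i: "i \<in> {1..3::nat}"
      and l: "l \<in> set (filter (\<lambda>l. (l mod 3 + 1) mod 3 + 1 = i) [0..<3*h])"
    from l have l1: "l < 3*h" and l2: "(l mod 3 + 1) mod 3 + 1 = i" by auto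
    from H l1 have "Q (l mod 3) (l div 3)" by blast
    then show "lab (l mod 3) (dig (l div 3) (x (l mod 3 + 1))) = lab (l mod 3) (dig (l div 3) (x i))"
      unfolding Q_def l2 .
  qed
  also have "\<dots> \<longleftrightarrow> (\<forall>k<h. Q 0 k \<and> Q 1 k \<and> Q 2 k)" by (rule all_l_split)
  also have "\<dots> \<longleftrightarrow> (\<forall>k<h. dig k (x 1) = dig k (x 2) \<and> dig k (x 2) = dig k (x 3))"
  proof -
    have Qs: "Q 0 k = (lab 0 (dig k (x 1)) = lab 0 (dig k (x 2)))"
      "Q 1 k = (lab 1 (dig k (x 2)) = lab 1 (dig k (x 3)))"
      "Q 2 k = (lab 2 (dig k (x 3)) = lab 2 (dig k (x 1)))" for k
    proof -
      have n: "(0::nat)+1 = 1" "(1::nat)+1 = 2" "(2::nat)+1 = 3" "(1::nat) mod 3 + 1 = 2"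
        "(2::nat) mod 3 + 1 = 3" "(3::nat) mod 3 + 1 = 1" by simp_all
      show "Q 0 k = (lab 0 (dig k (x 1)) = lab 0 (dig k (x 2)))"
        "Q 1 k = (lab 1 (dig k (x 2)) = lab 1 (dig k (x 3)))"
        "Q 2 k = (lab 2 (dig k (x 3)) = lab 2 (dig k (x 1)))"
        by (simp only: Q_def n)+
    qed
    show ?thesis
    proof (intro iffI allI impI)
      fix k assume H: "\<forall>k<h. Q 0 k \<and> Q 1 k \<and> Q 2 k" and "k < h"
      then have "Q 0 k" "Q 1 k" "Q 2 k" by auto
      then show "dig k (x 1) = dig k (x 2) \<and> dig k (x 2) = dig k (x 3)"
        unfolding Qs by (rule lab_key[OF dig_lt dig_lt dig_lt])
    next
      fix k assume H: "\<forall>k<h. dig k (x 1) = dig k (x 2) \<and> dig k (x 2) = dig k (x 3)" and "k < h"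
      then have "dig k (x 1) = dig k (x 2)" "dig k (x 2) = dig k (x 3)" by auto
      then show "Q 0 k \<and> Q 1 k \<and> Q 2 k" unfolding Qs by simp
    qed
  qed
  also have "\<dots> \<longleftrightarrow> x 1 = x 2 \<and> x 2 = x 3"
  proof
    assume H: "\<forall>k<h. dig k (x 1) = dig k (x 2) \<and> dig k (x 2) = dig k (x 3)"
    have xr: "x i \<in> {1..6^h}" if "i \<in> {1..3}" for i
      by (rule PiE_mem[OF x[unfolded inputs_def] that])
    have a1: "x 1 \<in> {1..6^h}" by (rule xr) simp
    have a2: "x 2 \<in> {1..6^h}" by (rule xr) simp
    have a3: "x 3 \<in> {1..6^h}" by (rule xr) simp
    have b1: "1 \<le> x 1" "x 1 \<le> 6^h" using a1 by simp_all
    have c1: "x 1 - 1 < x 1" using b1(1) by simp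
    have r1: "1 \<le> x 1" "x 1 - 1 < 6^h" using b1(1) less_le_trans[OF c1 b1(2)] by blast+
    have b2: "1 \<le> x 2" "x 2 \<le> 6^h" using a2 by simp_all
    have c2: "x 2 - 1 < x 2" using b2(1) by simp
    have r2: "1 \<le> x 2" "x 2 - 1 < 6^h" using b2(1) less_le_trans[OF c2 b2(2)] by blast+
    have b3: "1 \<le> x 3" "x 3 \<le> 6^h" using a3 by simp_all
    have c3: "x 3 - 1 < x 3" using b3(1) by simp
    have r3: "1 \<le> x 3" "x 3 - 1 < 6^h" using b3(1) less_le_trans[OF c3 b3(2)] by blast+
    have H1: "\<forall>k<h. (x 1 - 1) div 6^k mod 6 = (x 2 - 1) div 6^k mod 6"
      using H unfolding dig_def by blast
    have H2: "\<forall>k<h. (x 2 - 1) div 6^k mod 6 = (x 3 - 1) div 6^k mod 6"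
      using H unfolding dig_def by blast
    have "x 1 - 1 = x 2 - 1" by (rule digits_inj[OF r1(2) r2(2) H1])
    moreover have "x 2 - 1 = x 3 - 1" by (rule digits_inj[OF r2(2) r3(2) H2])
    ultimately show "x 1 = x 2 \<and> x 2 = x 3" using r1 r2 r3 by linarith
  next
    assume "x 1 = x 2 \<and> x 2 = x 3"
    then show "\<forall>k<h. dig k (x 1) = dig k (x 2) \<and> dig k (x 2) = dig k (x 3)" by simp
  qed
  also have "\<dots> \<longleftrightarrow> (\<forall>i\<in>{1..3}. \<forall>j\<in>{1..3}. x i = x j)"
  proof
    assume "x 1 = x 2 \<and> x 2 = x 3"
    then have e: "x 2 = x 1" "x 3 = x 1" by simp_all
    have c: "i \<in> {1..3::nat} \<Longrightarrow> x i = x 1" for i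
    proof -
      assume "i \<in> {1..3::nat}"
      then have "i = 1 \<or> i = 2 \<or> i = 3" by auto
      then show ?thesis using e by (elim disjE) simp_all
    qed
    show "\<forall>i\<in>{1..3}. \<forall>j\<in>{1..3}. x i = x j"
    proof (intro ballI)
      fix i j assume "i \<in> {1..3::nat}" "j \<in> {1..3::nat}"
      then show "x i = x j" using c[of i] c[of j] by simp
    qed
  next
    assume H: "\<forall>i\<in>{1..3::nat}. \<forall>j\<in>{1..3::nat}. x i = x j"
    have "1 \<in> {1..3::nat}" "2 \<in> {1..3::nat}" "3 \<in> {1..3::nat}" by simp_all
    then show "x 1 = x 2 \<and> x 2 = x 3" using H by blast
  qed
  finally show ?thesis .
qed

lemma complexity_nonneg: "complexity n M P \<ge> 0" if "M \<ge> 1"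
proof -
  have fin: "finite (inputs n M)" unfolding inputs_def by (intro finite_PiE) auto
  have "restrict (\<lambda>_. 1) {1..n} \<in> inputs n M" unfolding inputs_def restrict_PiE_iff using that by auto
  then have ne: "inputs n M \<noteq> {}" by blast
  have "S_count n M P l \<ge> 1" for l
    unfolding S_count_def using fin ne by (simp add: Suc_le_eq card_gt_0_iff)
  then have c1: "S_count n M P l \<ge> 1" for l .
  have "0 \<le> log 2 (real (S_count n M P l))" for l
    using c1[of l] by (subst zero_le_log_cancel_iff) auto
  then show ?thesis unfolding complexity_def by (intro sum_nonneg) simp
qed

theorem mainTheorem10:
  fixes h :: nat
  assumes "h \<ge> 1"
  shows "(\<exists>P out. solves_MEQ_AD 3 (6 ^ h) P out \<and> complexity 3 (6 ^ h) P = real h * log 2 27)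
         \<and> C_AD 3 (6 ^ h) \<le> real h * log 2 27"
proof -
  have sol: "solves_MEQ_AD 3 (6 ^ h) (prot h) (outf h)"
    unfolding solves_MEQ_AD_def using valid_prot correct_prot by blast
  have "C_AD 3 (6 ^ h) \<le> complexity 3 (6 ^ h) (prot h)"
    unfolding C_AD_def
  proof (rule cInf_lower)
    show "complexity 3 (6 ^ h) (prot h) \<in> {complexity 3 (6 ^ h) P |P. \<exists>out. solves_MEQ_AD 3 (6 ^ h) P out}"
      using sol by blast
    show "bdd_below {complexity 3 (6 ^ h) P |P. \<exists>out. solves_MEQ_AD 3 (6 ^ h) P out}"
      by (rule bdd_belowI[of _ 0]) (auto intro: complexity_nonneg)
  qed
  then show ?thesis using sol complexity_prot by auto
qed

end
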